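(* Let $k\geq3$, $A=\{0,1,\dots,k-1\}$, $N=k-1$ and let $T\colon A^{N^2}\to A$ be given by $T(x_{1,1},\dots,x_{1,N},\dots,x_{N,1},\dots,x_{N,N})=1$ if $x_{i,j}=i$ for all $i,j$ or $x_{i,j}=j$ for all $i,j$, and $0$ otherwise. Then \[\{T\}^{*(1)}=\{\mathrm{id}_A\}\cup\{f\colon A\to A : f(0)=f(1)=0\}.\]
   Context: An $m$-ary $g$ commutes with an $n$-ary $h$ if $g\bigl((h((x_{ij})_{j}))_{i}\bigr)=h\bigl((g((x_{ij})_{i}))_{j}\bigr)$ for all $(x_{ij})\in A^{m\times n}$. For $F$ a set of finitary operations on $A$ (positive arity), $F^*$ is the set of all finitary operations of positive arity commuting with every member of $F$, and $F^{*(1)}$ is the set of unary members of $F^*$. *)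

theory Defs
  imports "HOL-Library.FuncSet"
begin

text \<open>An n-ary operation on A is modelled as a function on tuples
  x :: nat \<Rightarrow> 'a, whose argument positions are 0,...,n-1 (only the values
  x 0, ..., x (n-1) are passed; other positions are cut off by restrict).\<close>

definition commutes ::
  "'a set \<Rightarrow> nat \<Rightarrow> ((nat \<Rightarrow> 'a) \<Rightarrow> 'a) \<Rightarrow> nat \<Rightarrow> ((nat \<Rightarrow> 'a) \<Rightarrow> 'a) \<Rightarrow> bool" where
  "commutes A m g n h \<longleftrightarrow>
     (\<forall>x. (\<forall>i<m. \<forall>j<n. x i j \<in> A) \<longrightarrow>
        g (\<lambda>i\<in>{..<m}. h (\<lambda>j\<in>{..<n}. x i j)) =
        h (\<lambda>j\<in>{..<n}. g (\<lambda>i\<in>{..<m}. x i j)))"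

definition unary_centralizer ::
  "'a set \<Rightarrow> (nat \<times> ((nat \<Rightarrow> 'a) \<Rightarrow> 'a)) set \<Rightarrow> ('a \<Rightarrow> 'a) set" where
  "unary_centralizer A F =
     {f \<in> A \<rightarrow>\<^sub>E A. \<forall>(n, h) \<in> F. commutes A 1 (\<lambda>x. f (x 0)) n h}"

text \<open>The N^2-ary operation T on {0..k-1}, N = k-1. The argument
  x_{i,j} (1 \<le> i,j \<le> N, row-major) sits at position (i-1)*N + (j-1),
  i.e. position p has i = p div N + 1 and j = p mod N + 1.\<close>

definition T_op :: "nat \<Rightarrow> (nat \<Rightarrow> nat) \<Rightarrow> nat" where
  "T_op k x = (let N = k - 1 in
     if (\<forall>p<N*N. x p = p div N + 1) \<or> (\<forall>p<N*N. x p = p mod N + 1) then 1 else 0)"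

end

theory Submission
  imports Defs
begin

lemma comm_iff:
  "commutes A 1 (\<lambda>x. f (x 0)) n h \<longleftrightarrow>
   (\<forall>y. (\<forall>j<n. y j \<in> A) \<longrightarrow> f (h (restrict y {..<n})) = h (\<lambda>j\<in>{..<n}. f (y j)))"
proof
  assume c: "commutes A 1 (\<lambda>x. f (x 0)) n h"
  show "\<forall>y. (\<forall>j<n. y j \<in> A) \<longrightarrow> f (h (restrict y {..<n})) = h (\<lambda>j\<in>{..<n}. f (y j))"
  proof (intro allI impI)
    fix y :: "nat \<Rightarrow> 'a" assume "\<forall>j<n. y j \<in> A"
    then have "f (h (\<lambda>j\<in>{..<n}. (\<lambda>i. y) 0 j)) = h (\<lambda>j\<in>{..<n}. f ((\<lambda>i. y) 0 j))"
      using c unfolding commutes_def by (drule_tac x="\<lambda>i. y" in spec) auto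
    then show "f (h (restrict y {..<n})) = h (\<lambda>j\<in>{..<n}. f (y j))" by simp
  qed
next
  assume H: "\<forall>y. (\<forall>j<n. y j \<in> A) \<longrightarrow> f (h (restrict y {..<n})) = h (\<lambda>j\<in>{..<n}. f (y j))"
  show "commutes A 1 (\<lambda>x. f (x 0)) n h"
    unfolding commutes_def
  proof (intro allI impI)
    fix x :: "nat \<Rightarrow> nat \<Rightarrow> 'a" assume "\<forall>i<1. \<forall>j<n. x i j \<in> A"
    then have "\<forall>j<n. x 0 j \<in> A" by auto
    then have "f (h (restrict (x 0) {..<n})) = h (\<lambda>j\<in>{..<n}. f (x 0 j))" using H by blast
    then show "f ((\<lambda>i\<in>{..<1}. h (\<lambda>j\<in>{..<n}. x i j)) 0) = h (\<lambda>j\<in>{..<n}. f ((\<lambda>i\<in>{..<1}. x i j) 0))"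
      by simp
  qed
qed

lemma T_cong:
  assumes "\<And>p. p < (k-1)*(k-1) \<Longrightarrow> x p = y p"
  shows "T_op k x = T_op k y"
  using assms unfolding T_op_def Let_def by simp

lemma T_le1: "T_op k x \<le> 1"
  unfolding T_op_def Let_def by simp

lemma no_cover:
  assumes k: "k \<ge> 3" and f0: "f 0 = 0" and f1: "f (1::nat) = (0::nat)"
    and cov: "\<And>i. 1 \<le> i \<Longrightarrow> i \<le> k - 1 \<Longrightarrow> \<exists>a<k. f a = i"
  shows False
proof -
  have "{1..k-1} \<subseteq> f ` {2..<k}"
  proof
    fix i assume "i \<in> {1..k-1}"
    then obtain a where a: "a < k" "f a = i" using cov by auto
    have "f a \<noteq> 0" using a \<open>i \<in> {1..k-1}\<close> by auto
    then have "a \<noteq> 0" "a \<noteq> 1" using f0 f1 by metis+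
    with a show "i \<in> f ` {2..<k}" by force
  qed
  then have "card {1..k-1} \<le> card (f ` {2..<k})" by (rule card_mono[rotated]) simp
  also have "\<dots> \<le> card {2..<k}" by (rule card_image_le) simp
  finally show False using k by simp
qed

theorem lemma3p2:
  fixes k :: nat
  assumes "k \<ge> 3"
  shows "unary_centralizer {0..<k} {((k - 1) * (k - 1), T_op k)} =
         {restrict id {0..<k}} \<union> {f \<in> {0..<k} \<rightarrow>\<^sub>E {0..<k}. f 0 = 0 \<and> f 1 = 0}"
proof -
  define N where "N = k - 1"
  have N2: "N \<ge> 2" using assms N_def by simp
  have "N*2 \<le> N*N" using N2 by (rule mult_le_mono2)
  then have NN: "N < N*N" "1 < N*N" using N2 by linarith+
  have Tdef: "T_op k x = (if (\<forall>p<N*N. x p = p div N + 1) \<or> (\<forall>p<N*N. x p = p mod N + 1) then 1 else 0)" for x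
    unfolding T_op_def Let_def N_def ..
  have Ndiv: "N div N = 1" "N mod N = 0" "1 div N = 0" "1 mod N = 1" using N2 by auto
  show ?thesis
  proof (rule equalityI; rule subsetI)
    fix f assume "f \<in> unary_centralizer {0..<k} {((k - 1) * (k - 1), T_op k)}"
    then have fA: "f \<in> {0..<k} \<rightarrow>\<^sub>E {0..<k}" and
      H: "\<And>y. (\<forall>j<N*N. y j \<in> {0..<k}) \<Longrightarrow> f (T_op k (restrict y {..<N*N})) = T_op k (\<lambda>j\<in>{..<N*N}. f (y j))"
      unfolding unary_centralizer_def comm_iff N_def by auto
    have c0: "T_op k (restrict (\<lambda>_. 0) {..<N*N}) = 0"
      unfolding Tdef using NN by force
    have c1: "T_op k (\<lambda>j\<in>{..<N*N}. f ((\<lambda>_. 0) j)) = 0"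
    proof -
      have "\<not> (\<forall>p<N*N. (\<lambda>j\<in>{..<N*N}. f ((\<lambda>_. 0::nat) j)) p = p div N + 1)"
      proof
        assume P: "\<forall>p<N*N. (\<lambda>j\<in>{..<N*N}. f ((\<lambda>_. 0::nat) j)) p = p div N + 1"
        have "f 0 = 0 div N + 1" using P[rule_format, of 0] NN by simp
        moreover have "f 0 = N div N + 1" using P[rule_format, of N] NN by simp
        ultimately show False using Ndiv by simp
      qed
      moreover have "\<not> (\<forall>p<N*N. (\<lambda>j\<in>{..<N*N}. f ((\<lambda>_. 0::nat) j)) p = p mod N + 1)"
      proof
        assume P: "\<forall>p<N*N. (\<lambda>j\<in>{..<N*N}. f ((\<lambda>_. 0::nat) j)) p = p mod N + 1"
        have "f 0 = 0 mod N + 1" using P[rule_format, of 0] NN by simp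
        moreover have "f 0 = 1 mod N + 1" using P[rule_format, of 1] NN by simp
        ultimately show False using Ndiv by simp
      qed
      ultimately show ?thesis unfolding Tdef by simp
    qed
    have f0: "f 0 = 0" using H[of "\<lambda>_. 0"] c0 c1 assms by simp
    define R where "R p = p div N + 1" for p
    have RA: "\<forall>j<N*N. R j \<in> {0..<k}"
    proof (intro allI impI)
      fix j assume "j < N*N"
      then have "j div N < N" by (simp add: less_mult_imp_div_less)
      then show "R j \<in> {0..<k}" unfolding R_def N_def using N2 N_def by auto
    qed
    have "T_op k (restrict R {..<N*N}) = 1" unfolding Tdef R_def by simp
    then have f1: "f 1 = T_op k (\<lambda>j\<in>{..<N*N}. f (R j))" using H[OF RA] by simp
    show "f \<in> {restrict id {0..<k}} \<union> {f \<in> {0..<k} \<rightarrow>\<^sub>E {0..<k}. f 0 = 0 \<and> f 1 = 0}"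
    proof (cases "(\<forall>p<N*N. f (R p) = p div N + 1)")
      case True
      have "f = restrict id {0..<k}"
      proof
        fix a show "f a = restrict id {0..<k} a"
        proof (cases "a < k")
          case False then show ?thesis using fA by (auto simp: PiE_def extensional_def)
        next
          case a: True
          show ?thesis
          proof (cases "a = 0")
            case True then show ?thesis using f0 a by simp
          next
            case False
            then have "(a-1)*N < N*N" using a N_def N2 by (simp add: mult_less_mono1)
            moreover have "(a-1)*N div N = a - 1" using N2 by simp
            ultimately have "f (R ((a-1)*N)) = a" using True False by fastforce
            moreover have "R ((a-1)*N) = a" using N2 False unfolding R_def by simp
            ultimately show ?thesis using a by simp
          qed
        qed
      qed
      then show ?thesis by simp
    next
      case nR: False
      show ?thesis
      proof (cases "(\<forall>p<N*N. f (R p) = p mod N + 1)")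
        case True
        then have "f (R 0) = 1" "f (R 1) = 2" using NN Ndiv by auto
        moreover have "R 0 = 1" "R 1 = 1" using Ndiv unfolding R_def by auto
        ultimately show ?thesis by simp
      next
        case False
        then have "f 1 = 0" using f1 nR unfolding Tdef by auto
        then show ?thesis using fA f0 by simp
      qed
    qed
  next
    fix f assume "f \<in> {restrict id {0..<k}} \<union> {f \<in> {0..<k} \<rightarrow>\<^sub>E {0..<k}. f 0 = 0 \<and> f 1 = 0}"
    then consider "f = restrict id {0..<k}" | "f \<in> {0..<k} \<rightarrow>\<^sub>E {0..<k}" "f 0 = 0" "f 1 = 0" by auto
    then show "f \<in> unary_centralizer {0..<k} {((k - 1) * (k - 1), T_op k)}"
    proof cases
      case 1
      have "\<forall>y. (\<forall>j<N*N. y j \<in> {0..<k}) \<longrightarrow> f (T_op k (restrict y {..<N*N})) = T_op k (\<lambda>j\<in>{..<N*N}. f (y j))"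
      proof (intro allI impI)
        fix y assume y: "\<forall>j<N*N. y j \<in> {0..<k}"
        have "T_op k (restrict y {..<N*N}) < k" using T_le1[of k "restrict y {..<N*N}"] assms by linarith
        then have "f (T_op k (restrict y {..<N*N})) = T_op k (restrict y {..<N*N})" using 1 by simp
        also have "\<dots> = T_op k (\<lambda>j\<in>{..<N*N}. f (y j))"
          by (rule T_cong) (use y 1 N_def in auto)
        finally show "f (T_op k (restrict y {..<N*N})) = T_op k (\<lambda>j\<in>{..<N*N}. f (y j))" .
      qed
      then show ?thesis unfolding unary_centralizer_def comm_iff N_def using 1 by auto
    next
      case 2
      have "\<forall>y. (\<forall>j<N*N. y j \<in> {0..<k}) \<longrightarrow> f (T_op k (restrict y {..<N*N})) = T_op k (\<lambda>j\<in>{..<N*N}. f (y j))"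
      proof (intro allI impI)
        fix y assume y: "\<forall>j<N*N. y j \<in> {0..<k}"
        have l: "f (T_op k (restrict y {..<N*N})) = 0"
          using T_le1[of k "restrict y {..<N*N}"] 2 by (cases "T_op k (restrict y {..<N*N})") auto
        have nr: "\<not> (\<forall>p<N*N. (\<lambda>j\<in>{..<N*N}. f (y j)) p = p div N + 1)"
        proof
          assume P: "\<forall>p<N*N. (\<lambda>j\<in>{..<N*N}. f (y j)) p = p div N + 1"
          show False
          proof (rule no_cover[OF assms 2(2,3)])
            fix i assume i: "1 \<le> i" "i \<le> k - 1"
            then have "i-1 < N" using N_def by arith
            then have "(i-1)*N < N*N" using N2 by (simp add: mult_less_mono1)
            moreover have "(i-1)*N div N = i - 1" using N2 by simp
            ultimately have "f (y ((i-1)*N)) = i" "y ((i-1)*N) < k" using P y i by auto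
            then show "\<exists>a<k. f a = i" by blast
          qed
        qed
        have nc: "\<not> (\<forall>p<N*N. (\<lambda>j\<in>{..<N*N}. f (y j)) p = p mod N + 1)"
        proof
          assume P: "\<forall>p<N*N. (\<lambda>j\<in>{..<N*N}. f (y j)) p = p mod N + 1"
          show False
          proof (rule no_cover[OF assms 2(2,3)])
            fix i assume i: "1 \<le> i" "i \<le> k - 1"
            then have "i-1 < N" using N_def by arith
            then have "i-1 < N*N" using NN by linarith
            moreover have "(i-1) mod N = i - 1" using N_def i by simp
            ultimately have "f (y (i-1)) = i" "y (i-1) < k" using P y i by auto
            then show "\<exists>a<k. f a = i" by blast
          qed
        qed
        show "f (T_op k (restrict y {..<N*N})) = T_op k (\<lambda>j\<in>{..<N*N}. f (y j))"
          using l nr nc unfolding Tdef[of "\<lambda>j\<in>{..<N*N}. f (y j)"] by simp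
      qed
      then show ?thesis unfolding unary_centralizer_def comm_iff N_def using 2 by auto
    qed
  qed
qed

end
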